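(* Let $n=em$ with $e,m\geq1$ integers, let $k$ be a positive integer, let $\alpha,\beta\in\mathbb{F}_{2^e}^*$ with $\beta=\alpha^2$, and let $c_i\in\mathbb{F}_2$ for $1\leq i\leq\lfloor\frac{m-1}{2}\rfloor$. Define $f_Q:\mathbb{F}_{2^n}\to\mathbb{F}_2$ by $$f_Q(x)=p(\alpha x)+\sum_{i=1}^{\lfloor\frac{m-1}{2}\rfloor}c_i\,\mathrm{tr}_1^n\big(\beta x^{1+2^{eki}}\big),$$ where $$p(x)=\begin{cases}\sum_{i=1}^{n/2-1}\mathrm{tr}_1^n\big(x^{1+2^i}\big)+\mathrm{tr}_1^{n/2}\big(x^{1+2^{n/2}}\big) & \text{if } n \text{ is even},\\ \sum_{i=1}^{(n-1)/2}\mathrm{tr}_1^n\big(x^{1+2^i}\big) & \text{if } n \text{ is odd}.\end{cases}$$ Then $f_Q$ is bent (if $n$ is even), respectively semi-bent (if $n$ is odd), if and only if $\gcd(c(x^k),x^m-1)=1$ in $\mathbb{F}_2[x]$, where $c(x)=1+\sum_{i=1}^{\lfloor\frac{m-1}{2}\rfloor}c_i(x^i+x^{m-i})$.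
   Context: $\mathbb{F}_{2^e}$ is regarded as a subfield of $\mathbb{F}_{2^n}$ (as $e\mid n$). $\mathrm{tr}_1^n(x)=\sum_{j=0}^{n-1}x^{2^j}$ is the absolute trace from $\mathbb{F}_{2^n}$ to $\mathbb{F}_2$, and for even $n$, $\mathrm{tr}_1^{n/2}(y)=\sum_{j=0}^{n/2-1}y^{2^j}$ for $y\in\mathbb{F}_{2^{n/2}}$ (note $x^{1+2^{n/2}}\in\mathbb{F}_{2^{n/2}}$). For $g:\mathbb{F}_{2^n}\to\mathbb{F}_2$, its Walsh transform is $\hat g(a)=\sum_{x\in\mathbb{F}_{2^n}}(-1)^{g(x)+\mathrm{tr}_1^n(ax)}$; $g$ is bent if $|\hat g(a)|=2^{n/2}$ for all $a\in\mathbb{F}_{2^n}$, and semi-bent if $|\hat g(a)|\in\{0,2^{\lfloor (n+2)/2\rfloor}\}$ for all $a\in\mathbb{F}_{2^n}$. *)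

theory Defs
  imports "HOL-Library.Z2" "HOL-Computational_Algebra.Polynomial"
begin

(* absolute-type trace sum_{j<r} x^(2^j); with r = n this is tr_1^n on F_{2^n},
   with r = n/2 applied to elements of F_{2^{n/2}} it is tr_1^{n/2} *)
definition tr :: "nat \<Rightarrow> 'a::field \<Rightarrow> 'a" where
  "tr r x = (\<Sum>j<r. x ^ (2 ^ j))"

definition sgn1 :: "'a::field \<Rightarrow> int" where
  "sgn1 y = (if y = 0 then 1 else -1)"

(* Walsh transform of a Boolean function g : F_{2^n} -> F_2 (values 0/1 in the field) *)
definition walsh :: "nat \<Rightarrow> ('a::{field,finite} \<Rightarrow> 'a) \<Rightarrow> 'a \<Rightarrow> int" where
  "walsh n g a = (\<Sum>x\<in>UNIV. sgn1 (g x + tr n (a * x)))"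

definition bent :: "nat \<Rightarrow> ('a::{field,finite} \<Rightarrow> 'a) \<Rightarrow> bool" where
  "bent n g \<longleftrightarrow> (\<forall>a. \<bar>walsh n g a\<bar> = 2 ^ (n div 2))"

definition semi_bent :: "nat \<Rightarrow> ('a::{field,finite} \<Rightarrow> 'a) \<Rightarrow> bool" where
  "semi_bent n g \<longleftrightarrow> (\<forall>a. \<bar>walsh n g a\<bar> \<in> {0, 2 ^ ((n + 2) div 2)})"

definition p_fun :: "nat \<Rightarrow> 'a::field \<Rightarrow> 'a" where
  "p_fun n x = (if even n
     then (\<Sum>i\<in>{1..<n div 2}. tr n (x ^ (1 + 2 ^ i))) + tr (n div 2) (x ^ (1 + 2 ^ (n div 2)))
     else (\<Sum>i\<in>{1..(n - 1) div 2}. tr n (x ^ (1 + 2 ^ i))))"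

definition fQ :: "nat \<Rightarrow> nat \<Rightarrow> nat \<Rightarrow> nat \<Rightarrow> 'a::field \<Rightarrow> 'a \<Rightarrow> (nat \<Rightarrow> bit) \<Rightarrow> 'a \<Rightarrow> 'a" where
  "fQ n e m k \<alpha> \<beta> c x = p_fun n (\<alpha> * x)
     + (\<Sum>i\<in>{1..(m - 1) div 2}. (if c i = 1 then 1 else 0) * tr n (\<beta> * x ^ (1 + 2 ^ (e * k * i))))"

definition c_poly :: "nat \<Rightarrow> (nat \<Rightarrow> bit) \<Rightarrow> bit poly" where
  "c_poly m c = 1 + (\<Sum>i\<in>{1..(m - 1) div 2}. smult (c i) (monom 1 i + monom 1 (m - i)))"

end

theory Submission
  imports Defs
begin

context
  fixes n :: nat
  assumes cardn: "card (UNIV :: 'a::{field,finite} set) = 2 ^ n"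
begin

lemma two_eq0: "(2::'a) = 0"
proof -
  have "(\<Sum>y\<in>(UNIV::'a set). 1 + y) = (\<Sum>y\<in>UNIV. y)"
    by (rule sum.reindex_bij_witness[of _ "\<lambda>y. y - 1" "\<lambda>y. 1 + y"]) auto
  then have "of_nat (card (UNIV::'a set)) = (0::'a)"
    by (simp add: sum.distrib)
  then have "(2::'a) ^ n = 0" by (simp add: cardn)
  then show ?thesis by simp
qed

lemma add_self[simp]: "(x::'a) + x = 0"
  using two_eq0 by (metis mult_2 mult_zero_left)

lemma minus_eq_plus: "(x::'a) - y = x + y"
  by (metis add_diff_cancel_right' add_self diff_add_cancel add.assoc)

lemma uminus_eq: "- (x::'a) = x"
  by (metis add_self add.commute minus_unique)

lemma fermat: "(x::'a) ^ (2 ^ n) = x"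
proof (cases "x = 0")
  case True
  then show ?thesis by simp
next
  case False
  let ?U = "UNIV - {0::'a}"
  have "(\<Prod>y\<in>?U. x * y) = (\<Prod>y\<in>?U. y)"
    by (rule prod.reindex_bij_witness[of _ "\<lambda>y. y / x" "\<lambda>y. x * y"]) (use False in auto)
  then have "x ^ card ?U * (\<Prod>y\<in>?U. y) = 1 * (\<Prod>y\<in>?U. y)"
    by (simp add: prod.distrib)
  moreover have "(\<Prod>y\<in>?U. y) \<noteq> 0" by simp
  ultimately have "x ^ card ?U = 1" by (metis mult_cancel_right)
  moreover have "card ?U = 2 ^ n - 1" by (simp add: card_Diff_singleton cardn)
  moreover have "(2::nat) ^ n \<ge> 1" by simp
  ultimately have "x ^ (2 ^ n - 1) = 1" by simp
  then have "x ^ (2 ^ n - 1) * x = x" by simp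
  moreover have "x ^ (2 ^ n - 1) * x = x ^ (2 ^ n)"
    by (metis \<open>1 \<le> 2 ^ n\<close> le_add_diff_inverse2 power_add power_one_right)
  ultimately show ?thesis by metis
qed

lemma frob_add: "((x::'a) + y) ^ (2 ^ j) = x ^ (2 ^ j) + y ^ (2 ^ j)"
proof (induction j)
  case 0
  then show ?case by simp
next
  case (Suc j)
  have sq: "\<And>a b::'a. (a + b) ^ 2 = a ^ 2 + b ^ 2"
  proof -
    fix a b :: 'a
    have "(a + b) ^ 2 = a^2 + b^2 + 2 * a * b" by (simp add: power2_eq_square algebra_simps)
    then show "(a + b) ^ 2 = a ^ 2 + b ^ 2" by (simp add: two_eq0)
  qed
  have "(x + y) ^ (2 ^ Suc j) = ((x + y) ^ (2 ^ j)) ^ 2"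
    by (simp add: power_mult[symmetric] mult.commute)
  also have "\<dots> = (x ^ 2 ^ j) ^ 2 + (y ^ 2 ^ j) ^ 2" using Suc sq by simp
  also have "\<dots> = x ^ (2 ^ Suc j) + y ^ (2 ^ Suc j)"
    by (simp add: power_mult[symmetric] mult.commute)
  finally show ?case .
qed

lemma frob_sum: "(sum (f::_ \<Rightarrow> 'a) A) ^ (2 ^ j) = (\<Sum>i\<in>A. (f i) ^ (2 ^ j))"
  by (induction A rule: infinite_finite_induct) (simp_all add: frob_add)

lemma fermat_mult: "(x::'a) ^ (2 ^ (n * t)) = x"
  by (induction t) (simp_all add: power_add power_mult fermat)

end

definition ob :: "bit \<Rightarrow> 'a::field" where "ob b = (if b = 1 then 1 else 0)"

definition opk :: "nat \<Rightarrow> bit poly \<Rightarrow> 'a::field \<Rightarrow> 'a" where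
  "opk e q y = (\<Sum>t\<le>degree q. ob (coeff q t) * y ^ (2 ^ (e * t)))"

lemma ob_0[simp]: "ob 0 = 0" and ob_1[simp]: "ob 1 = 1" by (simp_all add: ob_def)

lemma ob_mult: "ob (a * b) = ob a * ob b"
  by (cases a; cases b) (simp_all add: ob_def)

lemma ob_idem: "ob b * ob b = ob b"
  by (cases b) (simp_all add: ob_def)

lemma ob_pow: "k \<ge> 1 \<Longrightarrow> ob b ^ k = ob b"
  by (cases b) (simp_all add: ob_def)

lemma idem01: "(t::'a::field) ^ 2 = t \<Longrightarrow> t = 0 \<or> t = 1"
  by (metis mult_cancel_left1 power2_eq_square)


context
  fixes n :: nat
  assumes cardn: "card (UNIV :: 'a::{field,finite} set) = 2 ^ n"
begin

lemma n_pos: "n \<ge> 1"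
proof (rule ccontr)
  assume "\<not> n \<ge> 1"
  then have "card (UNIV :: 'a set) = 1" using cardn by simp
  moreover have "{0, 1::'a} \<subseteq> UNIV" by simp
  then have "card {0, 1::'a} \<le> card (UNIV :: 'a set)" by (intro card_mono) auto
  ultimately show False by simp
qed

lemma ob_add: "ob (a + b) = (ob a + ob b :: 'a)"
  using add_self[OF cardn, of 1]
  by (cases a; cases b) (simp_all add: ob_def)

lemma ob_sum: "ob (sum f A) = (\<Sum>i\<in>A. ob (f i) :: 'a)"
  by (induction A rule: infinite_finite_induct) (simp_all add: ob_add del: add_bit_eq_xor)

lemma tr_add: "tr r (u + v) = tr r u + tr r (v::'a)"
  by (simp add: tr_def frob_add[OF cardn] sum.distrib)

lemma tr_zero[simp]: "tr r (0::'a) = 0" by (simp add: tr_def power_0_left)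

lemma tr_sum: "tr r (sum f A) = (\<Sum>i\<in>A. tr r (f i :: 'a))"
  by (induction A rule: infinite_finite_induct) (simp_all add: tr_add)

lemma tr_sq_gen: assumes "(v::'a) ^ (2 ^ r) = v" shows "(tr r v) ^ 2 = tr r v"
proof -
  have "(tr r v) ^ 2 = (\<Sum>j<r. (v ^ 2 ^ j) ^ 2 ^ 1)"
    unfolding tr_def using frob_sum[OF cardn, of _ _ 1] by simp
  also have "\<dots> = (\<Sum>j<r. v ^ 2 ^ Suc j)"
    by (simp add: power_mult[symmetric] mult.commute)
  also have "\<dots> = tr r v"
  proof -
    have "(\<Sum>j<Suc r. v ^ 2 ^ j) = v ^ 2 ^ 0 + (\<Sum>j<r. v ^ 2 ^ Suc j)"
      by (rule sum.lessThan_Suc_shift)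
    moreover have "(\<Sum>j<Suc r. v ^ 2 ^ j) = (\<Sum>j<r. v ^ 2 ^ j) + v ^ 2 ^ r" by simp
    ultimately show ?thesis using assms by (simp add: tr_def add.commute)
  qed
  finally show ?thesis .
qed

lemma tr_idem: "(tr n (u::'a)) ^ 2 = tr n u"
  by (rule tr_sq_gen) (rule fermat[OF cardn])

lemma tr01: "tr n (u::'a) = 0 \<or> tr n u = 1"
  using idem01 tr_idem by blast

lemma tr_sq: "tr r ((u::'a) ^ 2) = (tr r u) ^ 2"
proof -
  have "(tr r u) ^ 2 = (\<Sum>j<r. (u ^ 2 ^ j) ^ 2 ^ 1)"
    unfolding tr_def using frob_sum[OF cardn, of _ _ 1] by simp
  then show ?thesis by (simp add: tr_def power_mult[symmetric] mult.commute)
qed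

lemma tr_frob: "tr n ((u::'a) ^ (2 ^ s)) = tr n u"
proof (induction s)
  case 0 then show ?case by simp
next
  case (Suc s)
  have "u ^ 2 ^ Suc s = (u ^ 2 ^ s) ^ 2" by (simp add: power_mult[symmetric] mult.commute)
  then show ?case using Suc by (simp add: tr_sq tr_idem)
qed

lemma exists_nonroot:
  assumes "finite E" "E \<noteq> {}" "\<forall>d\<in>E. d < 2 ^ n"
  shows "\<exists>y::'a. (\<Sum>d\<in>E. y ^ d) \<noteq> 0"
proof (rule ccontr)
  assume H: "\<not> ?thesis"
  define P :: "'a poly" where "P = (\<Sum>d\<in>E. monom 1 d)"
  have ev: "poly P y = (\<Sum>d\<in>E. y ^ d)" for y
    by (simp add: P_def poly_sum poly_monom)
  have "coeff P (Max E) = (\<Sum>d\<in>E. if d = Max E then 1 else 0)"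
    by (simp add: P_def coeff_sum coeff_monom)
  also have "\<dots> = 1" using assms by (simp add: sum.delta')
  finally have "P \<noteq> 0" by auto
  have "degree P \<le> Max E"
  proof (rule degree_le, intro allI impI)
    fix i assume "Max E < i"
    then have "\<forall>d\<in>E. d \<noteq> i" using assms(1) by (metis Max_ge not_le)
    then show "coeff P i = 0" by (simp add: P_def coeff_sum coeff_monom)
  qed
  moreover have "Max E < 2 ^ n" using assms by simp
  moreover have "{x. poly P x = 0} = UNIV" using H ev by auto
  then have "card (UNIV::'a set) \<le> degree P" using card_poly_roots_bound[OF \<open>P \<noteq> 0\<close>] by simp
  ultimately show False using cardn by simp
qed

lemma exists_tr1: "\<exists>t::'a. tr n t = 1"
proof -
  have inj: "inj_on (\<lambda>j::nat. (2::nat) ^ j) {..<n}" by (simp add: inj_on_def)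
  have "\<exists>y::'a. (\<Sum>d\<in>(\<lambda>j. 2 ^ j) ` {..<n}. y ^ d) \<noteq> 0"
  proof (intro exists_nonroot)
    have "0 \<in> {..<n}" using n_pos by simp
    then show "(\<lambda>j. (2::nat) ^ j) ` {..<n} \<noteq> {}" by blast
  qed auto
  then obtain y :: 'a where "(\<Sum>d\<in>(\<lambda>j. 2 ^ j) ` {..<n}. y ^ d) \<noteq> 0" by blast
  then have "tr n y \<noteq> 0" by (simp add: tr_def sum.reindex[OF inj])
  then show ?thesis using tr01 by blast
qed

lemma nondeg: assumes "\<forall>x::'a. tr n (x * d) = 0" shows "d = 0"
proof (rule ccontr)
  assume "d \<noteq> 0"
  obtain t :: 'a where "tr n t = 1" using exists_tr1 by blast
  moreover have "(t / d) * d = t" using \<open>d \<noteq> 0\<close> by simp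
  moreover have "tr n ((t / d) * d) = 0" using assms by blast
  ultimately show False by (metis zero_neq_one)
qed

lemma tr_one: "tr n (1::'a) = of_nat n" by (simp add: tr_def)

end

context
  fixes n :: nat
  assumes cardn: "card (UNIV :: 'a::{field,finite} set) = 2 ^ n"
begin

lemma opk_bound: assumes "degree q < N"
  shows "opk e q (y::'a) = (\<Sum>t<N. ob (coeff q t) * y ^ (2 ^ (e * t)))"
  unfolding opk_def
proof (rule sum.mono_neutral_left)
  show "\<forall>i\<in>{..<N} - {..degree q}. ob (coeff q i) * y ^ 2 ^ (e * i) = 0"
    by (auto simp: coeff_eq_0)
qed (use assms in auto)

lemma opk_add: "opk e (p + q) (y::'a) = opk e p y + opk e q y"
proof -
  define N where "N = Suc (max (degree p) (degree q))"
  have "degree (p + q) < N" using degree_add_le_max[of p q] unfolding N_def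
    by linarith
  moreover have "degree p < N" "degree q < N" unfolding N_def by auto
  ultimately show ?thesis
    by (simp add: opk_bound[OF _] ob_add[OF cardn] sum.distrib distrib_right del: add_bit_eq_xor)
qed

lemma opk_0[simp]: "opk e 0 (y::'a) = 0" by (simp add: opk_def)

lemma opk_smult: "opk e (smult a q) (y::'a) = ob a * opk e q y"
proof -
  have "degree (smult a q) < Suc (degree q)" using degree_smult_le[of a q] by simp
  then have "opk e (smult a q) y = (\<Sum>t<Suc (degree q). ob (coeff (smult a q) t) * y ^ (2 ^ (e * t)))"
    by (rule opk_bound)
  also have "\<dots> = ob a * (\<Sum>t<Suc (degree q). ob (coeff q t) * y ^ (2 ^ (e * t)))"
    by (simp only: coeff_smult ob_mult sum_distrib_left mult.assoc)
  also have "(\<Sum>t<Suc (degree q). ob (coeff q t) * y ^ (2 ^ (e * t))) = opk e q y"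
    by (rule opk_bound[symmetric]) simp
  finally show ?thesis .
qed

lemma opk_pCons: "opk e (pCons a p) (y::'a) = ob a * y + opk e p (y ^ (2 ^ e))"
proof -
  have d: "degree (pCons a p) < Suc (Suc (degree p))" by (simp add: degree_pCons_le le_imp_less_Suc)
  have "opk e (pCons a p) y = (\<Sum>t<Suc (Suc (degree p)). ob (coeff (pCons a p) t) * y ^ (2 ^ (e * t)))"
    by (rule opk_bound[OF d])
  also have "\<dots> = ob a * y + (\<Sum>t<Suc (degree p). ob (coeff p t) * y ^ (2 ^ (e * Suc t)))"
    by (subst sum.lessThan_Suc_shift) simp
  also have "(\<Sum>t<Suc (degree p). ob (coeff p t) * y ^ (2 ^ (e * Suc t))) = opk e p (y ^ (2 ^ e))"
    by (simp add: opk_bound[of _ "Suc (degree p)"] power_mult[symmetric] power_add)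
  finally show ?thesis .
qed

lemma opk_y0[simp]: "opk e q (0::'a) = 0" by (simp add: opk_def power_0_left)

lemma opk_yadd: "opk e q ((y::'a) + z) = opk e q y + opk e q z"
  by (simp add: opk_def frob_add[OF cardn] distrib_left sum.distrib)

lemma opk_ypow: "opk e q ((y::'a) ^ (2 ^ e)) = (opk e q y) ^ (2 ^ e)"
proof -
  have "(opk e q y) ^ (2 ^ e) = (\<Sum>t\<le>degree q. (ob (coeff q t) * y ^ (2 ^ (e * t))) ^ (2 ^ e))"
    unfolding opk_def by (rule frob_sum[OF cardn])
  also have "\<dots> = opk e q (y ^ (2 ^ e))"
    unfolding opk_def
    by (intro sum.cong refl) (simp add: power_mult_distrib ob_pow power_mult[symmetric] mult.commute)
  finally show ?thesis by simp
qed

lemma opk_mult: "opk e (p * q) (y::'a) = opk e p (opk e q y)"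
proof (induction p arbitrary: y)
  case 0
  then show ?case by simp
next
  case (pCons a p)
  have "opk e (pCons a p * q) y = ob a * opk e q y + opk e (p * q) (y ^ 2 ^ e)"
    by (simp only: mult_pCons_left opk_add opk_smult opk_pCons ob_0 mult_zero_left add_0_left)
  also have "\<dots> = ob a * opk e q y + opk e p ((opk e q y) ^ 2 ^ e)"
    using pCons by (simp add: opk_ypow)
  also have "\<dots> = opk e (pCons a p) (opk e q y)" by (simp add: opk_pCons)
  finally show ?case .
qed

lemma opk_one: "opk e 1 (y::'a) = y" by (simp add: opk_def)

lemma opk_monom: "opk e (monom 1 t) (y::'a) = y ^ (2 ^ (e * t))"
proof -
  have "opk e (monom 1 t) y = (\<Sum>ta\<le>t. if ta = t then y ^ (2 ^ (e * ta)) else 0)"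
    unfolding opk_def degree_monom_eq[OF one_neq_zero]
    by (intro sum.cong refl) (auto simp: ob_def coeff_monom)
  then show ?thesis by simp
qed

lemma opk_sum: "opk e (sum f A) (y::'a) = (\<Sum>i\<in>A. opk e (f i) y)"
  by (induction A rule: infinite_finite_induct) (simp_all add: opk_add)

lemma opk_at1: "opk e q (1::'a) = ob (poly q 1)"
  by (simp only: opk_def poly_altdef power_one mult_1_right ob_sum[OF cardn])

lemma opk_tr: "tr n (opk e q (y::'a)) = ob (poly q 1) * tr n y"
proof -
  have "tr n (opk e q y) = (\<Sum>t\<le>degree q. ob (coeff q t) * tr n y)"
    unfolding opk_def tr_sum[OF cardn]
    by (intro sum.cong refl) (simp add: ob_def tr_frob[OF cardn] tr_zero[OF cardn])
  also have "\<dots> = ob (poly q 1) * tr n y"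
    by (simp only: poly_altdef power_one mult_1_right ob_sum[OF cardn] sum_distrib_right)
  finally show ?thesis .
qed

lemma Xm_eq: "(monom 1 m - 1 :: bit poly) = monom 1 m + 1"
  by (simp add: poly_eq_iff del: add_bit_eq_xor)

lemma opk_Xm: assumes "e * m = n" shows "opk e (monom 1 m - 1) (y::'a) = 0"
  by (simp add: Xm_eq opk_add opk_monom opk_one assms fermat[OF cardn] add_self[OF cardn] del: add_bit_eq_xor)

lemma opk_nonzero:
  assumes "q \<noteq> 0" "degree q < m" "e * m = n" "e \<ge> 1"
  shows "\<exists>y::'a. opk e q y \<noteq> 0"
proof -
  define T where "T = {t\<in>{..degree q}. coeff q t = 1}"
  have inj: "inj_on (\<lambda>t::nat. (2::nat) ^ (e * t)) T"
    using assms(4) by (auto simp: inj_on_def)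
  have eq: "opk e q y = (\<Sum>d\<in>(\<lambda>t. 2 ^ (e * t)) ` T. y ^ d)" for y :: 'a
  proof -
    have "opk e q y = (\<Sum>t\<le>degree q. if coeff q t = 1 then y ^ (2 ^ (e * t)) else 0)"
      unfolding opk_def by (intro sum.cong refl) (simp add: ob_def)
    also have "\<dots> = (\<Sum>t\<in>T. y ^ (2 ^ (e * t)))"
      unfolding T_def by (rule sum.inter_filter[symmetric]) simp
    also have "\<dots> = (\<Sum>d\<in>(\<lambda>t. 2 ^ (e * t)) ` T. y ^ d)"
      by (simp add: sum.reindex[OF inj])
    finally show ?thesis .
  qed
  have "lead_coeff q \<noteq> 0" using assms(1) by simp
  then have "lead_coeff q = 1" by (metis bit_not_zero_iff)
  then have "degree q \<in> T" unfolding T_def by simp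
  moreover have "finite T" unfolding T_def by simp
  moreover have "\<forall>d\<in>(\<lambda>t. 2 ^ (e * t)) ` T. d < (2::nat) ^ n"
  proof
    fix d :: nat assume "d \<in> (\<lambda>t. 2 ^ (e * t)) ` T"
    then obtain t where t: "t \<in> T" "d = 2 ^ (e * t)" by blast
    then have "t < m" using assms(2) unfolding T_def by auto
    then have "e * t < e * m" using assms(4) by simp
    then have "e * t < n" using assms(3) by simp
    then show "d < 2 ^ n" using t by simp
  qed
  ultimately have "\<exists>y::'a. (\<Sum>d\<in>(\<lambda>t. 2 ^ (e * t)) ` T. y ^ d) \<noteq> 0"
    by (intro exists_nonroot[OF cardn]) auto
  then show ?thesis using eq by metis
qed

end

context
  fixes n :: nat
  assumes cardn: "card (UNIV :: 'a::{field,finite} set) = 2 ^ n"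
begin

definition b01 :: "'a \<Rightarrow> bool" where "b01 u \<longleftrightarrow> u = 0 \<or> u = 1"

lemma b01_add: "b01 u \<Longrightarrow> b01 v \<Longrightarrow> b01 (u + v)"
  using add_self[OF cardn, of 1] by (auto simp: b01_def)

lemma sgn1_add: "b01 u \<Longrightarrow> b01 v \<Longrightarrow> sgn1 (u + v) = sgn1 u * sgn1 v"
  using add_self[OF cardn, of 1] by (auto simp: b01_def sgn1_def)

lemma sgn1_sq: "sgn1 u * sgn1 u = 1" by (simp add: sgn1_def)

lemma sgn1_plus1: "b01 u \<Longrightarrow> sgn1 (u + 1) = - sgn1 u"
  using add_self[OF cardn, of 1] by (auto simp: b01_def sgn1_def)

lemma b01_tr: "b01 (tr n (u::'a))" using tr01[OF cardn] by (simp add: b01_def)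

lemma add_cc: "(x::'a) + c + c = x"
  by (simp only: add.assoc add_self[OF cardn] add_0_right)

lemma add_c1: "(u::'a) + (v + u) = v"
  by (simp only: add.commute[of v u] add.assoc[symmetric] add_self[OF cardn] add_0_left)

lemma add_c2: "(u::'a) + v + u = v"
  by (simp only: add.commute[of u v] add_cc)

lemma sum3_zero: assumes h: "a + b + c = (0::'a)" shows "a = b + c"
proof -
  have e: "a + (b + c) = 0" using h by (simp only: add.assoc)
  have "a = a + (b + c) + (b + c)" by (simp only: add_cc)
  also have "\<dots> = 0 + (b + c)" by (simp only: e)
  also have "\<dots> = b + c" by (simp only: add_0_left)
  finally show ?thesis .
qed

lemma char_sum0:
  fixes A :: "'a set" and cc :: 'a
  assumes "\<forall>x\<in>A. x + cc \<in> A" "\<forall>x\<in>A. b01 (h x)" "\<forall>x\<in>A. h (x + cc) = h x + 1"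
  shows "(\<Sum>x\<in>A. sgn1 (h x :: 'a)) = 0"
proof -
  have "(\<Sum>x\<in>A. sgn1 (h x)) = (\<Sum>x\<in>A. sgn1 (h (x + cc)))"
  proof -
    have xx: "x + cc + cc = x" for x by (rule add_cc)
    have inA: "x + cc \<in> A" if "x \<in> A" for x using assms(1) that by blast
    show ?thesis
      by (rule sum.reindex_bij_witness[of _ "\<lambda>x. x + cc" "\<lambda>x. x + cc"]) (simp_all only: xx inA)
  qed
  also have "\<dots> = (\<Sum>x\<in>A. - sgn1 (h x))"
    using assms(2,3) by (intro sum.cong refl) (simp add: sgn1_plus1)
  finally have "(\<Sum>x\<in>A. sgn1 (h x)) = - (\<Sum>x\<in>A. sgn1 (h x))" by (simp only: sum_negf)
  then show ?thesis by linarith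
qed

lemma char_sum_tr:
  assumes "(d::'a) \<noteq> 0"
  shows "(\<Sum>x\<in>UNIV. sgn1 (tr n (x * d))) = 0"
proof -
  obtain t :: 'a where t: "tr n t = 1" using exists_tr1[OF cardn] by blast
  show ?thesis
  proof (rule char_sum0[where cc = "t / d"])
    show "\<forall>x\<in>UNIV. tr n ((x + t / d) * d) = tr n (x * d) + 1"
      using assms t by (simp add: distrib_right tr_add[OF cardn])
  qed (auto simp: b01_tr)
qed

lemma walsh_quad:
  fixes f L :: "'a \<Rightarrow> 'a"
  assumes f01: "\<forall>x. b01 (f x)" and f0: "f 0 = 0"
    and fB: "\<forall>x z. f (x + z) = f x + f z + tr n (x * L z)"
  defines "R \<equiv> {z. L z = 0}"
  defines "S \<equiv> \<lambda>a. (\<Sum>z\<in>R. sgn1 (f z + tr n (a * z)))"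
  shows "\<forall>a. (walsh n f a)^2 = 2 ^ n * S a"
    and "\<forall>a. S a = 0 \<or> S a = int (card R)"
    and "(\<Sum>a\<in>UNIV. S a) = 2 ^ n"
    and "0 \<in> R"
proof -
  note trA = tr_add[OF cardn]
  have Ladd: "L (z + z') = L z + L z'" for z z'
  proof -
    have "\<forall>x. tr n (x * (L (z + z') + L z + L z')) = 0"
    proof
      fix x
      have e1: "f (x + (z + z')) = f x + (f z + f z' + tr n (z * L z')) + tr n (x * L (z + z'))"
        using fB by simp
      have e2: "f ((x + z) + z') = (f x + f z + tr n (x * L z)) + f z' + tr n ((x + z) * L z')"
        using fB by simp
      have "tr n (x * L (z + z')) = tr n (x * L z) + tr n (x * L z')"
        using e1 e2 by (simp add: add.assoc distrib_right trA)
      then show "tr n (x * (L (z + z') + L z + L z')) = 0"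
        by (simp add: distrib_left trA two_eq0[OF cardn])
    qed
    then have "L (z + z') + L z + L z' = 0" by (rule nondeg[OF cardn])
    then show ?thesis by (rule sum3_zero)
  qed
  have "L 0 = L 0 + L 0" using Ladd[of 0 0] by (simp only: add_0_left)
  then have L0: "L 0 = 0" using add_self[OF cardn, of "L 0"] by (rule trans)
  show R0: "0 \<in> R" by (simp add: R_def L0)
  have Rclosed: "z + z' \<in> R" if "z \<in> R" "z' \<in> R" for z z'
    using that Ladd by (simp add: R_def)
  {
    fix a :: 'a
    define g where "g = (\<lambda>x. f x + tr n (a * x))"
    have g01: "b01 (g x)" for x unfolding g_def by (intro b01_add f01[rule_format] b01_tr)
    have gB: "g (x + z) = g x + g z + tr n (x * L z)" for x z
      unfolding g_def fB[rule_format] distrib_left trA by (simp add: add_ac)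
    have W: "walsh n f a = (\<Sum>x\<in>UNIV. sgn1 (g x))" by (simp add: walsh_def g_def)
    have inner: "(\<Sum>y\<in>UNIV. sgn1 (g x) * sgn1 (g y)) = (\<Sum>z\<in>UNIV. sgn1 (g z) * sgn1 (tr n (x * L z)))" for x
    proof -
      have "(\<Sum>y\<in>UNIV. sgn1 (g x) * sgn1 (g y)) = (\<Sum>z\<in>UNIV. sgn1 (g x) * sgn1 (g (x + z)))"
      proof -
        have c1: "u + (v + u) = v" for u v :: 'a by (rule add_c1)
        have c2: "u + v + u = v" for u v :: 'a by (rule add_c2)
        have c3: "u + (u + v) = v" for u v :: 'a
          by (simp only: add.assoc[symmetric] add_self[OF cardn] add_0_left)
        show ?thesis
          by (rule sum.reindex_bij_witness[of _ "\<lambda>y. y + x" "\<lambda>z. x + z"]) (simp_all only: c1 c2 c3 UNIV_I)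
      qed
      also have "\<dots> = (\<Sum>z\<in>UNIV. sgn1 (g z) * sgn1 (tr n (x * L z)))"
      proof (intro sum.cong refl)
        fix z
        have "sgn1 (g (x + z)) = sgn1 (g x) * sgn1 (g z) * sgn1 (tr n (x * L z))"
          unfolding gB by (simp add: sgn1_add b01_add g01 b01_tr)
        then show "sgn1 (g x) * sgn1 (g (x + z)) = sgn1 (g z) * sgn1 (tr n (x * L z))"
          by (simp add: mult.assoc[symmetric] sgn1_sq)
      qed
      finally show ?thesis .
    qed
    have "(walsh n f a)^2 = (\<Sum>x\<in>UNIV. \<Sum>y\<in>UNIV. sgn1 (g x) * sgn1 (g y))"
      by (simp add: W power2_eq_square sum_product)
    also have "\<dots> = (\<Sum>x\<in>UNIV. \<Sum>z\<in>UNIV. sgn1 (g z) * sgn1 (tr n (x * L z)))"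
      using inner by simp
    also have "\<dots> = (\<Sum>z\<in>UNIV. sgn1 (g z) * (\<Sum>x\<in>UNIV. sgn1 (tr n (x * L z))))"
      by (subst sum.swap) (simp add: sum_distrib_left)
    also have "\<dots> = (\<Sum>z\<in>UNIV. if z \<in> R then 2 ^ n * sgn1 (g z) else 0)"
    proof (intro sum.cong refl)
      fix z
      show "sgn1 (g z) * (\<Sum>x\<in>UNIV. sgn1 (tr n (x * L z))) = (if z \<in> R then 2 ^ n * sgn1 (g z) else 0)"
      proof (cases "z \<in> R")
        case True
        then have "(\<Sum>x\<in>UNIV. sgn1 (tr n (x * L z))) = 2 ^ n"
          by (simp add: R_def sgn1_def tr_zero[OF cardn] cardn)
        then show ?thesis using True by simp
      next
        case False
        then show ?thesis using char_sum_tr[of "L z"] by (simp add: R_def)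
      qed
    qed
    also have "\<dots> = 2 ^ n * S a"
      by (simp add: S_def g_def sum.If_cases sum_distrib_left)
    finally have "(walsh n f a)^2 = 2 ^ n * S a" .
    moreover have "S a = 0 \<or> S a = int (card R)"
    proof (cases "\<exists>z0\<in>R. g z0 = 1")
      case True
      then obtain z0 where z0: "z0 \<in> R" "g z0 = 1" by blast
      have "S a = (\<Sum>z\<in>R. sgn1 (g z))" by (simp add: S_def g_def)
      also have "\<dots> = 0"
      proof (rule char_sum0[where cc = z0])
        show "\<forall>x\<in>R. x + z0 \<in> R" using Rclosed z0 by blast
        show "\<forall>x\<in>R. b01 (g x)" using g01 by blast
        show "\<forall>x\<in>R. g (x + z0) = g x + 1"
          using z0 by (simp add: gB R_def tr_zero[OF cardn])
      qed
      finally show ?thesis by simp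
    next
      case False
      then have "\<forall>z\<in>R. g z = 0" using g01 by (auto simp: b01_def)
      then have "S a = (\<Sum>z\<in>R. 1)" unfolding S_def g_def
        by (intro sum.cong refl) (simp add: sgn1_def)
      then show ?thesis by simp
    qed
    ultimately have "(walsh n f a)^2 = 2 ^ n * S a \<and> (S a = 0 \<or> S a = int (card R))" by blast
  }
  then show "\<forall>a. (walsh n f a)^2 = 2 ^ n * S a" and "\<forall>a. S a = 0 \<or> S a = int (card R)" by auto
  have "(\<Sum>a\<in>UNIV. S a) = (\<Sum>z\<in>R. sgn1 (f z) * (\<Sum>a\<in>UNIV. sgn1 (tr n (a * z))))"
    unfolding S_def
    by (subst sum.swap) (simp add: sum_distrib_left sgn1_add f01 b01_tr)
  also have "\<dots> = (\<Sum>z\<in>R. if z = 0 then 2 ^ n else 0)"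
  proof (intro sum.cong refl)
    fix z
    show "sgn1 (f z) * (\<Sum>a\<in>UNIV. sgn1 (tr n (a * z))) = (if z = 0 then 2 ^ n else 0)"
    proof (cases "z = 0")
      case True
      then show ?thesis by (simp add: f0 sgn1_def tr_zero[OF cardn] cardn)
    next
      case False
      then show ?thesis using char_sum_tr[of z] by simp
    qed
  qed
  also have "\<dots> = 2 ^ n" using R0 by (simp add: sum.delta')
  finally show "(\<Sum>a\<in>UNIV. S a) = 2 ^ n" .
qed

end

context
  fixes n :: nat
  assumes cardn: "card (UNIV :: 'a::{field,finite} set) = 2 ^ n"
begin

lemma quad_bent_iff:
  fixes f L :: "'a \<Rightarrow> 'a"
  assumes f01: "\<forall>x. b01 (f x)" and f0: "f 0 = 0"
    and fB: "\<forall>x z. f (x + z) = f x + f z + tr n (x * L z)"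
    and ev: "even n"
  shows "bent n f \<longleftrightarrow> card {z. L z = 0} = 1"
proof -
  define R where "R = {z. L z = 0}"
  define S where "S = (\<lambda>a. (\<Sum>z\<in>R. sgn1 (f z + tr n (a * z))))"
  note WQ = walsh_quad[OF cardn f01 f0 fB, folded R_def, folded S_def]
  have W: "\<And>a. (walsh n f a)^2 = 2 ^ n * S a" using WQ(1) by (simp add: S_def)
  have Sv: "\<And>a. S a = 0 \<or> S a = int (card R)" using WQ(2) by (simp add: S_def)
  have R0: "0 \<in> R" using WQ(4) .
  have pw: "((2::int) ^ (n div 2))^2 = 2 ^ n"
    using ev by (simp add: power_mult[symmetric])
  show ?thesis
  proof
    assume "bent n f"
    then have "\<bar>walsh n f 0\<bar> = 2 ^ (n div 2)" by (simp add: bent_def)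
    then have "(walsh n f 0)^2 = 2 ^ n" using pw by (metis power2_abs)
    then have "S 0 = 1" using W[of 0] by simp
    then have "int (card R) = 1" using Sv[of 0] by simp
    then show "card {z. L z = 0} = 1" by (simp add: R_def)
  next
    assume "card {z. L z = 0} = 1"
    then have "card R = 1" by (simp add: R_def)
    then have R1: "R = {0}" using R0 by (metis card_1_singletonE singletonD)
    have "\<bar>walsh n f a\<bar> = 2 ^ (n div 2)" for a
    proof -
      have "S a = 1" by (simp add: S_def R1 f0 sgn1_def tr_zero[OF cardn])
      then have "(\<bar>walsh n f a\<bar>)^2 = ((2::int) ^ (n div 2))^2" using W[of a] pw by simp
      then show ?thesis by (subst (asm) power2_eq_iff_nonneg) auto
    qed
    then show "bent n f" by (simp add: bent_def)
  qed
qed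

lemma quad_semibent_iff:
  fixes f L :: "'a \<Rightarrow> 'a"
  assumes f01: "\<forall>x. b01 (f x)" and f0: "f 0 = 0"
    and fB: "\<forall>x z. f (x + z) = f x + f z + tr n (x * L z)"
    and od: "odd n"
  shows "semi_bent n f \<longleftrightarrow> card {z. L z = 0} = 2"
proof -
  define R where "R = {z. L z = 0}"
  define S where "S = (\<lambda>a. (\<Sum>z\<in>R. sgn1 (f z + tr n (a * z))))"
  note WQ = walsh_quad[OF cardn f01 f0 fB, folded R_def, folded S_def]
  have W: "\<And>a. (walsh n f a)^2 = 2 ^ n * S a" using WQ(1) by (simp add: S_def)
  have Sv: "\<And>a. S a = 0 \<or> S a = int (card R)" using WQ(2) by (simp add: S_def)
  have Ssum: "(\<Sum>a\<in>UNIV. S a) = 2 ^ n" using WQ(3) by (simp add: S_def)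
  have pw: "((2::int) ^ ((n + 2) div 2))^2 = 2 ^ n * 2"
  proof -
    have "(n + 2) div 2 * 2 = n + 1" using od by presburger
    then have "((2::int) ^ ((n + 2) div 2))^2 = 2 ^ (n + 1)" by (simp only: power_mult[symmetric])
    then show ?thesis by simp
  qed
  show ?thesis
  proof
    assume sb: "semi_bent n f"
    obtain a where a: "S a \<noteq> 0"
    proof (rule ccontr)
      assume "\<not> thesis"
      then have "\<forall>a. S a = 0" using that by blast
      then have "(\<Sum>a\<in>UNIV. S a) = 0" by simp
      then show False using Ssum by simp
    qed
    then have Sa: "S a = int (card R)" using Sv[of a] by simp
    then have "(walsh n f a)^2 \<noteq> 0" using W[of a] a by simp
    then have "\<bar>walsh n f a\<bar> = 2 ^ ((n + 2) div 2)" using sb by (auto simp: semi_bent_def)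
    then have "(walsh n f a)^2 = 2 ^ n * 2" using pw by (metis power2_abs)
    then have "int (card R) = 2" using W[of a] Sa by simp
    then show "card {z. L z = 0} = 2" by (simp add: R_def)
  next
    assume "card {z. L z = 0} = 2"
    then have c2: "card R = 2" by (simp add: R_def)
    have "\<bar>walsh n f a\<bar> \<in> {0, 2 ^ ((n + 2) div 2)}" for a
    proof (cases "S a = 0")
      case True
      then show ?thesis using W[of a] by simp
    next
      case False
      then have "S a = 2" using Sv[of a] c2 by simp
      then have "(\<bar>walsh n f a\<bar>)^2 = ((2::int) ^ ((n + 2) div 2))^2" using W[of a] pw by simp
      then show ?thesis by (subst (asm) power2_eq_iff_nonneg) auto
    qed
    then show "semi_bent n f" by (simp add: semi_bent_def)
  qed
qed

end

lemma pcompose_monom1: "pcompose (monom 1 i) q = q ^ i"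
proof (induction i)
  case 0 then show ?case by (simp add: pcompose_1)
next
  case (Suc i)
  have "monom (1::'a::comm_semiring_1) (Suc i) = pCons 0 (monom 1 i)" by (rule monom_Suc)
  then show ?case using Suc by (simp add: pcompose_pCons)
qed

lemma Xm_eq': "(monom 1 m - 1 :: bit poly) = monom 1 m + 1"
  by (simp add: poly_eq_iff del: add_bit_eq_xor)

lemma cK_eq: "pcompose (c_poly m c) (monom 1 k) =
   1 + (\<Sum>i\<in>{1..(m - 1) div 2}. smult (c i) (monom 1 (k * i) + monom 1 (k * (m - i))))"
  by (simp add: c_poly_def pcompose_add pcompose_1 pcompose_sum pcompose_smult pcompose_monom1 monom_power
      mult.commute del: add_bit_eq_xor mult_bit_eq_and)

lemma cK_at1: "poly (pcompose (c_poly m c) (monom 1 k)) 1 = 1"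
proof -
  have "poly (c_poly m c) 1 = 1 + (\<Sum>i\<in>{1..(m - 1) div 2}. c i * (1 + 1))"
    by (simp add: c_poly_def poly_sum poly_monom del: add_bit_eq_xor mult_bit_eq_and)
  also have "\<dots> = 1" by simp
  finally show ?thesis by (simp add: poly_pcompose poly_monom)
qed

context
  fixes n :: nat
  assumes cardn: "card (UNIV :: 'a::{field,finite} set) = 2 ^ n"
begin

lemma G_formula: "opk e (pcompose (c_poly m c) (monom 1 k)) (y::'a) =
   y + (\<Sum>i\<in>{1..(m - 1) div 2}. ob (c i) * (y ^ (2 ^ (e * (k * i))) + y ^ (2 ^ (e * (k * (m - i))))))"
  unfolding cK_eq
  by (simp add: opk_add[OF cardn] opk_one[OF cardn] opk_sum[OF cardn] opk_smult[OF cardn] opk_monom[OF cardn]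
      del: add_bit_eq_xor mult_bit_eq_and)

lemma of_nat_char2: "(of_nat j :: 'a) = (if even j then 0 else 1)"
proof -
  have "(of_nat j :: 'a) = of_nat (2 * (j div 2) + j mod 2)" by simp
  also have "\<dots> = 2 * of_nat (j div 2) + of_nat (j mod 2)" by (simp only: of_nat_add of_nat_mult of_nat_numeral)
  also have "\<dots> = of_nat (j mod 2)" by (simp add: two_eq0[OF cardn])
  finally show ?thesis by (cases "even j") (simp_all add: odd_iff_mod_2_eq_one)
qed

lemma G_one: "opk e (pcompose (c_poly m c) (monom 1 k)) (1::'a) = 1"
  by (simp add: opk_at1[OF cardn] cK_at1)

lemma opk_diff: "opk e (p - q) (y::'a) = opk e p y - opk e q y"
proof -
  have "opk e (p - q) y + opk e q y = opk e p y"
    using opk_add[OF cardn, of e "p - q" q y] by simp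
  then show ?thesis by (simp add: eq_diff_eq)
qed

lemma annih_not_coprime:
  assumes "opk e a (y0::'a) = 0" "opk e b y0 = 0" "y0 \<noteq> 0" "b \<noteq> 0"
  shows "\<not> coprime a b"
proof -
  define P where "P = (\<lambda>p::bit poly. p \<noteq> 0 \<and> opk e p y0 = 0)"
  have "P b" using assms by (simp add: P_def)
  then obtain d where d: "P d" and dmin: "\<forall>p. P p \<longrightarrow> degree d \<le> degree p"
    using ex_has_least_nat[of P b degree] by blast
  have d0: "d \<noteq> 0" and dy: "opk e d y0 = 0" using d by (auto simp: P_def)
  have dvd: "d dvd p" if "opk e p y0 = 0" for p
  proof -
    have "opk e (p mod d) y0 = opk e (p - (p div d) * d) y0"
      by (simp only: minus_div_mult_eq_mod)
    also have "\<dots> = 0" using that dy by (simp add: opk_diff opk_mult[OF cardn] opk_y0[OF cardn])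
    finally have m0: "opk e (p mod d) y0 = 0" .
    have "p mod d = 0"
    proof (rule ccontr)
      assume "p mod d \<noteq> 0"
      then have "P (p mod d)" using m0 by (simp add: P_def)
      then have "degree d \<le> degree (p mod d)" using dmin by blast
      moreover have "degree (p mod d) < degree d" using degree_mod_less'[OF d0 \<open>p mod d \<noteq> 0\<close>] .
      ultimately show False by simp
    qed
    then show ?thesis by (simp add: mod_eq_0_iff_dvd)
  qed
  have "\<not> is_unit d"
  proof
    assume "is_unit d"
    then have "degree d = 0" using is_unit_iff_degree[OF d0] by simp
    then obtain a where "d = [:a:]" by (rule degree_eq_zeroE)
    then have "d = 1" using d0 by (cases a) (simp_all add: one_pCons)
    then show False using dy assms(3) by (simp add: opk_one[OF cardn])
  qed
  then show ?thesis using dvd[OF assms(1)] dvd[OF assms(2)] by (rule not_coprimeI[rotated 2])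
qed

lemma Xm_nonzero: "m \<ge> 1 \<Longrightarrow> (monom 1 m - 1 :: bit poly) \<noteq> 0 \<and> degree (monom 1 m - 1 :: bit poly) = m"
proof -
  assume m: "m \<ge> 1"
  have "degree (monom 1 m + 1 :: bit poly) = m" using m
    by (subst degree_add_eq_left) (simp_all add: degree_monom_eq)
  moreover have "(monom 1 m - 1 :: bit poly) = monom 1 m + 1" by (rule Xm_eq')
  ultimately have dg: "degree (monom 1 m - 1 :: bit poly) = m" by (simp only:)
  then have "(monom 1 m - 1 :: bit poly) \<noteq> 0" using m by auto
  then show ?thesis using dg by blast
qed

lemma G_inj:
  assumes "coprime (pcompose (c_poly m c) (monom 1 k)) (monom 1 m - 1)" "e * m = n" "m \<ge> 1"
    and "opk e (pcompose (c_poly m c) (monom 1 k)) (y::'a) = 0"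
  shows "y = 0"
proof (rule ccontr)
  assume "y \<noteq> 0"
  have "\<not> coprime (pcompose (c_poly m c) (monom 1 k)) (monom 1 m - 1)"
    using annih_not_coprime[OF assms(4) opk_Xm[OF cardn assms(2)] \<open>y \<noteq> 0\<close>] Xm_nonzero[OF assms(3)] by blast
  then show False using assms(1) by blast
qed

lemma G_kernel:
  assumes "\<not> coprime (pcompose (c_poly m c) (monom 1 k)) (monom 1 m - 1)" "e * m = n" "e \<ge> 1" "m \<ge> 1"
  shows "\<exists>w::'a. w \<noteq> 0 \<and> opk e (pcompose (c_poly m c) (monom 1 k)) w = 0 \<and> tr n w = 0"
proof -
  let ?K = "pcompose (c_poly m c) (monom 1 k)" and ?X = "monom 1 m - 1 :: bit poly"
  obtain d where dK: "d dvd ?K" and dX: "d dvd ?X" and dnu: "\<not> is_unit d"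
    using assms(1) by (rule not_coprimeE)
  have X0: "?X \<noteq> 0" and degX: "degree ?X = m" using Xm_nonzero[OF assms(4)] by auto
  have d0: "d \<noteq> 0" using dX X0 by auto
  then have degd: "degree d \<ge> 1" using dnu is_unit_iff_degree[OF d0] by simp
  obtain hq where hq: "?X = d * hq" using dX by (rule dvdE)
  obtain q0 where q0: "?K = d * q0" using dK by (rule dvdE)
  have hq0: "hq \<noteq> 0" using hq X0 by auto
  have "degree ?X = degree d + degree hq" using hq d0 hq0 by (simp add: degree_mult_eq)
  then have deghq: "degree hq < m" using degX degd by simp
  have "poly ?K 1 = 1" by (rule cK_at1)
  then have "poly d 1 * poly q0 1 = 1" using q0 by (simp add: poly_mult del: mult_bit_eq_and)
  then have "poly d 1 \<noteq> 0" by auto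
  moreover have "poly ?X 1 = 0" by (simp add: poly_monom)
  ultimately have ph: "poly hq 1 = 0" using hq by (simp add: poly_mult)
  obtain y0 :: 'a where y0: "opk e hq y0 \<noteq> 0"
    using opk_nonzero[OF cardn hq0 deghq assms(2,3)] by blast
  define w where "w = opk e hq y0"
  have "opk e ?K w = opk e (?K * hq) y0" by (simp add: w_def opk_mult[OF cardn])
  also have "?K * hq = q0 * ?X" using q0 hq by (simp add: ac_simps)
  also have "opk e (q0 * ?X) y0 = 0" by (simp add: opk_mult[OF cardn] opk_Xm[OF cardn assms(2)] opk_y0[OF cardn])
  finally have "opk e ?K w = 0" .
  moreover have "tr n w = 0" by (simp add: w_def opk_tr[OF cardn] ph)
  ultimately show ?thesis using y0 w_def by blast
qed

end

context
  fixes n :: nat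
  assumes cardn: "card (UNIV :: 'a::{field,finite} set) = 2 ^ n"
begin

lemma quad_split: "(b::'a) * (x + z) ^ (1 + 2 ^ j) =
   b * x ^ (1 + 2 ^ j) + b * z ^ (1 + 2 ^ j) + b * (x * z ^ (2 ^ j)) + b * (z * x ^ (2 ^ j))"
proof -
  have "(x + z) ^ (1 + 2 ^ j) = (x + z) * (x ^ (2 ^ j) + z ^ (2 ^ j))"
    by (simp only: power_add power_one_right frob_add[OF cardn])
  moreover have "x ^ (1 + 2 ^ j) = x * x ^ (2 ^ j)" "z ^ (1 + 2 ^ j) = z * z ^ (2 ^ j)"
    by (simp_all only: power_add power_one_right)
  ultimately show ?thesis by (simp add: algebra_simps)
qed

lemma pow_sub: assumes "(a::'a) ^ (2 ^ e) = a" shows "a ^ (2 ^ (e * t)) = a"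
proof (induction t)
  case 0 then show ?case by simp
next
  case (Suc t)
  have "a ^ (2 ^ (e * Suc t)) = (a ^ (2 ^ (e * t))) ^ (2 ^ e)"
    by (simp add: power_mult[symmetric] power_add[symmetric] mult.commute)
  then show ?case using Suc assms by simp
qed

lemma tr_swap:
  assumes "j + s = n * t" "(b::'a) ^ (2 ^ s) = b"
  shows "tr n (b * (z * x ^ (2 ^ j))) = tr n (x * (b * z ^ (2 ^ s)))"
proof -
  have "tr n (b * (z * x ^ (2 ^ j))) = tr n ((b * (z * x ^ (2 ^ j))) ^ (2 ^ s))"
    by (rule tr_frob[OF cardn, symmetric])
  also have "(b * (z * x ^ (2 ^ j))) ^ (2 ^ s) = b ^ (2 ^ s) * (z ^ (2 ^ s) * x ^ (2 ^ j * 2 ^ s))"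
    by (simp add: power_mult_distrib power_mult)
  also have "x ^ (2 ^ j * 2 ^ s) = x" using assms(1)
    by (simp add: power_add[symmetric] fermat_mult[OF cardn])
  finally show ?thesis using assms(2) by (simp add: ac_simps)
qed

lemma tr_ob: "tr n (ob b * (u::'a)) = ob b * tr n u"
  by (cases b) (simp_all add: ob_def tr_zero[OF cardn])

lemma Q_split: assumes "j \<le> n"
  shows "tr n (((x::'a) + z) ^ (1 + 2 ^ j)) = tr n (x ^ (1 + 2 ^ j)) + tr n (z ^ (1 + 2 ^ j))
     + tr n (x * (z ^ (2 ^ j) + z ^ (2 ^ (n - j))))"
proof -
  have "tr n (1 * (z * x ^ (2 ^ j))) = tr n (x * (1 * z ^ (2 ^ (n - j))))"
    by (rule tr_swap[where t = 1]) (use assms in simp_all)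
  then show ?thesis
    using quad_split[of 1 x z j] by (simp add: tr_add[OF cardn] distrib_left add.assoc)
qed

lemma reflect_sum: assumes "a \<le> n"
  shows "(\<Sum>i\<in>{1..<a}. w (n - i)) = (\<Sum>i\<in>{n + 1 - a..<n}. (w i :: 'a))"
  by (rule sum.reindex_bij_witness[of _ "\<lambda>i. n - i" "\<lambda>i. n - i"]) (use assms in auto)

lemma trz_plus_z: "tr n (z::'a) + z = (\<Sum>i\<in>{1..<n}. z ^ (2 ^ i))"
proof -
  have n1: "n \<ge> 1" by (rule n_pos[OF cardn])
  have "tr n z = (\<Sum>i\<in>{0..<n}. z ^ (2 ^ i))" by (simp add: tr_def atLeast0LessThan)
  also have "\<dots> = z ^ (2 ^ 0) + (\<Sum>i\<in>{Suc 0..<n}. z ^ (2 ^ i))"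
    using n1 by (subst sum.atLeast_Suc_lessThan) simp_all
  finally have "tr n z = z + (\<Sum>i\<in>{1..<n}. z ^ (2 ^ i))" by simp
  then show ?thesis by (simp only: add.commute[of z] add_cc[OF cardn])
qed

lemma p_split: "p_fun n ((x::'a) + z) = p_fun n x + p_fun n z + tr n (x * (tr n z + z))"
proof (cases "even n")
  case True
  define hh where "hh = n div 2"
  have nh: "n = 2 * hh" using True by (simp add: hh_def)
  have hh1: "hh \<ge> 1" using n_pos[OF cardn] nh by simp
  have A: "(\<Sum>i\<in>{1..<hh}. tr n ((x + z) ^ (1 + 2 ^ i))) = (\<Sum>i\<in>{1..<hh}. tr n (x ^ (1 + 2 ^ i)))
     + (\<Sum>i\<in>{1..<hh}. tr n (z ^ (1 + 2 ^ i))) + tr n (x * (\<Sum>i\<in>{1..<hh}. z ^ (2 ^ i) + z ^ (2 ^ (n - i))))"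
  proof -
    have "(\<Sum>i\<in>{1..<hh}. tr n ((x + z) ^ (1 + 2 ^ i))) = (\<Sum>i\<in>{1..<hh}. tr n (x ^ (1 + 2 ^ i)) + tr n (z ^ (1 + 2 ^ i))
       + tr n (x * (z ^ (2 ^ i) + z ^ (2 ^ (n - i)))))"
      by (intro sum.cong refl Q_split) (use nh in auto)
    also have "\<dots> = (\<Sum>i\<in>{1..<hh}. tr n (x ^ (1 + 2 ^ i)))
     + (\<Sum>i\<in>{1..<hh}. tr n (z ^ (1 + 2 ^ i))) + tr n (x * (\<Sum>i\<in>{1..<hh}. z ^ (2 ^ i) + z ^ (2 ^ (n - i))))"
      by (simp only: sum.distrib tr_sum[OF cardn, symmetric] sum_distrib_left distrib_left)
    finally show ?thesis .
  qed
  have Tsplit: "tr hh ((x + z) ^ (1 + 2 ^ hh)) = tr hh (x ^ (1 + 2 ^ hh)) + tr hh (z ^ (1 + 2 ^ hh))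
     + tr n (x * z ^ (2 ^ hh))"
  proof -
    define u where "u = x * z ^ (2 ^ hh)"
    have uu: "z * x ^ (2 ^ hh) = u ^ (2 ^ hh)"
    proof -
      have "u ^ (2 ^ hh) = x ^ (2 ^ hh) * z ^ (2 ^ hh * 2 ^ hh)" by (simp add: u_def power_mult_distrib power_mult)
      also have "(2::nat) ^ hh * 2 ^ hh = 2 ^ n" using nh by (simp add: power_add[symmetric] mult_2)
      finally show ?thesis by (simp add: fermat[OF cardn] mult.commute)
    qed
    have tt: "tr hh u + tr hh (u ^ (2 ^ hh)) = tr n u"
    proof -
      have "tr n u = (\<Sum>j\<in>{0..<hh}. u ^ 2 ^ j) + (\<Sum>j\<in>{0 + hh..<hh + hh}. u ^ 2 ^ j)"
        unfolding tr_def using nh by (simp add: sum.atLeastLessThan_concat atLeast0LessThan[symmetric] mult_2)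
      also have "(\<Sum>j\<in>{0 + hh..<hh + hh}. u ^ 2 ^ j) = (\<Sum>j\<in>{0..<hh}. u ^ 2 ^ (j + hh))"
        by (rule sum.shift_bounds_nat_ivl)
      also have "\<dots> = tr hh (u ^ (2 ^ hh))"
        by (simp add: tr_def atLeast0LessThan power_mult[symmetric] power_add mult.commute)
      finally show ?thesis by (simp add: tr_def atLeast0LessThan)
    qed
    have "tr hh ((x + z) ^ (1 + 2 ^ hh)) = tr hh (x ^ (1 + 2 ^ hh)) + tr hh (z ^ (1 + 2 ^ hh))
       + (tr hh u + tr hh (u ^ (2 ^ hh)))"
      using quad_split[of 1 x z hh] uu by (simp add: tr_add[OF cardn] u_def add.assoc)
    then show ?thesis using tt by (simp add: u_def)
  qed
  have S: "(\<Sum>i\<in>{1..<hh}. z ^ (2 ^ i) + z ^ (2 ^ (n - i))) + z ^ (2 ^ hh) = tr n z + z"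
  proof -
    have "(\<Sum>i\<in>{1..<n}. z ^ (2 ^ i)) = (\<Sum>i\<in>{1..<hh}. z ^ (2 ^ i)) + (\<Sum>i\<in>{hh..<n}. z ^ (2 ^ i))"
      using nh hh1 by (intro sum.atLeastLessThan_concat[symmetric]) auto
    also have "(\<Sum>i\<in>{hh..<n}. z ^ (2 ^ i)) = z ^ (2 ^ hh) + (\<Sum>i\<in>{hh+1..<n}. z ^ (2 ^ i))"
      using nh hh1 by (subst sum.atLeast_Suc_lessThan) auto
    also have "(\<Sum>i\<in>{hh+1..<n}. z ^ (2 ^ i)) = (\<Sum>i\<in>{1..<hh}. z ^ (2 ^ (n - i)))"
      using reflect_sum[of hh "\<lambda>i. z ^ (2 ^ i)"] nh by simp
    finally show ?thesis using trz_plus_z[of z] by (simp add: sum.distrib add_ac)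
  qed
  have "p_fun n (x + z) = (\<Sum>i\<in>{1..<hh}. tr n ((x + z) ^ (1 + 2 ^ i))) + tr hh ((x + z) ^ (1 + 2 ^ hh))"
    using True by (simp add: p_fun_def hh_def)
  also have "\<dots> = p_fun n x + p_fun n z
      + tr n (x * ((\<Sum>i\<in>{1..<hh}. z ^ (2 ^ i) + z ^ (2 ^ (n - i))) + z ^ (2 ^ hh)))"
    using True unfolding A Tsplit by (simp add: p_fun_def hh_def[symmetric] distrib_left tr_add[OF cardn] add_ac)
  finally show ?thesis using S by simp
next
  case False
  define hh where "hh = (n - 1) div 2"
  have nh: "n = 2 * hh + 1" using False by (simp add: hh_def)
  have A: "(\<Sum>i\<in>{1..hh}. tr n ((x + z) ^ (1 + 2 ^ i))) = (\<Sum>i\<in>{1..hh}. tr n (x ^ (1 + 2 ^ i)))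
     + (\<Sum>i\<in>{1..hh}. tr n (z ^ (1 + 2 ^ i))) + tr n (x * (\<Sum>i\<in>{1..hh}. z ^ (2 ^ i) + z ^ (2 ^ (n - i))))"
  proof -
    have "(\<Sum>i\<in>{1..hh}. tr n ((x + z) ^ (1 + 2 ^ i))) = (\<Sum>i\<in>{1..hh}. tr n (x ^ (1 + 2 ^ i)) + tr n (z ^ (1 + 2 ^ i))
       + tr n (x * (z ^ (2 ^ i) + z ^ (2 ^ (n - i)))))"
      by (intro sum.cong refl Q_split) (use nh in auto)
    also have "\<dots> = (\<Sum>i\<in>{1..hh}. tr n (x ^ (1 + 2 ^ i)))
     + (\<Sum>i\<in>{1..hh}. tr n (z ^ (1 + 2 ^ i))) + tr n (x * (\<Sum>i\<in>{1..hh}. z ^ (2 ^ i) + z ^ (2 ^ (n - i))))"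
      by (simp only: sum.distrib tr_sum[OF cardn, symmetric] sum_distrib_left distrib_left)
    finally show ?thesis .
  qed
  have S: "(\<Sum>i\<in>{1..hh}. z ^ (2 ^ i) + z ^ (2 ^ (n - i))) = tr n z + z"
  proof -
    have "(\<Sum>i\<in>{1..<n}. z ^ (2 ^ i)) = (\<Sum>i\<in>{1..<hh+1}. z ^ (2 ^ i)) + (\<Sum>i\<in>{hh+1..<n}. z ^ (2 ^ i))"
      using nh by (intro sum.atLeastLessThan_concat[symmetric]) auto
    also have "(\<Sum>i\<in>{hh+1..<n}. z ^ (2 ^ i)) = (\<Sum>i\<in>{1..<hh+1}. z ^ (2 ^ (n - i)))"
      using reflect_sum[of "hh + 1" "\<lambda>i. z ^ (2 ^ i)"] nh by simp
    finally have "tr n z + z = (\<Sum>i\<in>{1..<hh+1}. z ^ (2 ^ i)) + (\<Sum>i\<in>{1..<hh+1}. z ^ (2 ^ (n - i)))"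
      by (simp add: trz_plus_z)
    then show ?thesis by (simp add: sum.distrib atLeastLessThanSuc_atLeastAtMost)
  qed
  show ?thesis using False A S by (simp add: p_fun_def hh_def)
qed

end

context
  fixes n :: nat
  assumes cardn: "card (UNIV :: 'a::{field,finite} set) = 2 ^ n"
begin

lemma C_split:
  assumes "n = e * m" "i \<le> m" "(b::'a) ^ (2 ^ e) = b"
  shows "tr n (b * (x + z) ^ (1 + 2 ^ (e * (k * i)))) = tr n (b * x ^ (1 + 2 ^ (e * (k * i))))
     + tr n (b * z ^ (1 + 2 ^ (e * (k * i))))
     + tr n (x * (b * z ^ (2 ^ (e * (k * i))) + b * z ^ (2 ^ (e * (k * (m - i))))))"
proof -
  have sw: "tr n (b * (z * x ^ (2 ^ (e * (k * i))))) = tr n (x * (b * z ^ (2 ^ (e * (k * (m - i))))))"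
  proof (rule tr_swap[OF cardn, where t = k])
    have "e * (k * i) + e * (k * (m - i)) = e * (k * (i + (m - i)))" by (simp add: algebra_simps)
    also have "\<dots> = n * k" using assms(1,2) by simp
    finally show "e * (k * i) + e * (k * (m - i)) = n * k" .
    show "b ^ 2 ^ (e * (k * (m - i))) = b" by (rule pow_sub[OF cardn assms(3)])
  qed
  have "tr n (b * (x * z ^ (2 ^ (e * (k * i))))) = tr n (x * (b * z ^ (2 ^ (e * (k * i)))))"
    by (simp add: ac_simps)
  then show ?thesis using sw quad_split[OF cardn, of b x z "e * (k * i)"]
    by (simp add: tr_add[OF cardn] distrib_left add.assoc)
qed

lemma b01_sum: "(\<forall>i\<in>A. b01 (f i)) \<Longrightarrow> b01 (sum f A :: 'a)"
proof (induction A rule: infinite_finite_induct)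
  case (infinite A) then show ?case by (simp add: b01_def[OF cardn])
next
  case empty then show ?case by (simp add: b01_def[OF cardn])
next
  case (insert x F) then show ?case by (simp add: b01_add[OF cardn])
qed

lemma b01_ob: "b01 u \<Longrightarrow> b01 (ob b * (u::'a))"
  by (cases b) (simp_all add: ob_def b01_def[OF cardn])

lemma p01: "b01 (p_fun n (y::'a))"
proof (cases "even n")
  case True
  define hh where "hh = n div 2"
  have nh: "2 ^ hh * 2 ^ hh = (2::nat) ^ n" using True by (simp add: hh_def power_add[symmetric] mult_2[symmetric])
  define v where "v = y ^ (1 + 2 ^ hh)"
  have "v ^ (2 ^ hh) = (y * y ^ (2 ^ hh)) ^ (2 ^ hh)" by (simp only: v_def power_add power_one_right)
  also have "\<dots> = y ^ (2 ^ hh) * y ^ (2 ^ hh * 2 ^ hh)" by (simp only: power_mult_distrib power_mult)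
  also have "\<dots> = y ^ (2 ^ hh) * y" using nh by (simp only: fermat[OF cardn])
  also have "\<dots> = v" by (simp only: v_def power_add power_one_right mult.commute)
  finally have "(tr hh v) ^ 2 = tr hh v" by (rule tr_sq_gen[OF cardn])
  then have "b01 (tr hh v)" using idem01 by (simp add: b01_def[OF cardn])
  moreover have "b01 (\<Sum>i\<in>{1..<n div 2}. tr n (y ^ (1 + 2 ^ i)))"
    by (intro b01_sum ballI b01_tr[OF cardn])
  ultimately show ?thesis using True by (simp add: p_fun_def b01_add[OF cardn] v_def hh_def)
next
  case False
  then show ?thesis by (simp add: p_fun_def b01_sum b01_tr[OF cardn])
qed

end

context
  fixes n e m k :: nat and \<alpha> \<beta> :: "'a::{field,finite}" and c :: "nat \<Rightarrow> bit"
  assumes card: "card (UNIV :: 'a set) = 2 ^ n"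
    and nem: "n = e * m" and e: "e \<ge> 1" and m: "m \<ge> 1" and k: "k \<ge> 1"
    and alpha_sub: "\<alpha> ^ (2 ^ e) = \<alpha>" and alpha_nz: "\<alpha> \<noteq> 0"
    and beta: "\<beta> = \<alpha> ^ 2"
begin

lemma beta_sub: "\<beta> ^ (2 ^ e) = \<beta>"
proof -
  have "\<beta> ^ (2 ^ e) = \<alpha> ^ (2 * 2 ^ e)" by (simp only: beta power_mult)
  also have "\<dots> = \<alpha> ^ (2 ^ e * 2)" by (simp only: mult.commute)
  also have "\<dots> = (\<alpha> ^ (2 ^ e)) ^ 2" by (rule power_mult)
  finally show ?thesis using alpha_sub beta by simp
qed

lemma fQ_eq: "fQ n e m k \<alpha> \<beta> c x = p_fun n (\<alpha> * x)
   + (\<Sum>i\<in>{1..(m - 1) div 2}. ob (c i) * tr n (\<beta> * x ^ (1 + 2 ^ (e * (k * i)))))"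
  by (simp add: fQ_def ob_def mult.assoc)

lemma fQ01: "b01 (fQ n e m k \<alpha> \<beta> c x)"
  unfolding fQ_eq
  by (intro b01_add[OF card] p01[OF card] b01_sum[OF card] ballI b01_ob[OF card] b01_tr[OF card])

lemma fQ0: "fQ n e m k \<alpha> \<beta> c 0 = 0"
  by (simp add: fQ_def p_fun_def power_0_left tr_zero[OF card])

lemma fQ_bil: "fQ n e m k \<alpha> \<beta> c (x + z) = fQ n e m k \<alpha> \<beta> c x + fQ n e m k \<alpha> \<beta> c z
  + tr n (x * (\<alpha> * (tr n (\<alpha> * z) + opk e (pcompose (c_poly m c) (monom 1 k)) (\<alpha> * z))))"
proof -
  let ?I = "{1..(m - 1) div 2}"
  define Y where "Y = (\<lambda>i. \<beta> * z ^ (2 ^ (e * (k * i))) + \<beta> * z ^ (2 ^ (e * (k * (m - i)))))"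
  have P: "p_fun n (\<alpha> * (x + z)) = p_fun n (\<alpha> * x) + p_fun n (\<alpha> * z) + tr n (x * (\<alpha> * (tr n (\<alpha> * z) + \<alpha> * z)))"
    using p_split[OF card, of "\<alpha> * x" "\<alpha> * z"] by (simp add: distrib_left ac_simps)
  have Cs: "(\<Sum>i\<in>?I. ob (c i) * tr n (\<beta> * (x + z) ^ (1 + 2 ^ (e * (k * i))))) =
      (\<Sum>i\<in>?I. ob (c i) * tr n (\<beta> * x ^ (1 + 2 ^ (e * (k * i)))))
    + (\<Sum>i\<in>?I. ob (c i) * tr n (\<beta> * z ^ (1 + 2 ^ (e * (k * i)))))
    + tr n (x * (\<Sum>i\<in>?I. ob (c i) * Y i))"
  proof -
    have "(\<Sum>i\<in>?I. ob (c i) * tr n (\<beta> * (x + z) ^ (1 + 2 ^ (e * (k * i))))) =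
       (\<Sum>i\<in>?I. ob (c i) * tr n (\<beta> * x ^ (1 + 2 ^ (e * (k * i)))) + ob (c i) * tr n (\<beta> * z ^ (1 + 2 ^ (e * (k * i))))
          + tr n (ob (c i) * (x * Y i)))"
    proof (intro sum.cong refl)
      fix i assume "i \<in> ?I"
      then have "i \<le> m" by auto
      then show "ob (c i) * tr n (\<beta> * (x + z) ^ (1 + 2 ^ (e * (k * i)))) =
        ob (c i) * tr n (\<beta> * x ^ (1 + 2 ^ (e * (k * i)))) + ob (c i) * tr n (\<beta> * z ^ (1 + 2 ^ (e * (k * i))))
          + tr n (ob (c i) * (x * Y i))"
      proof -
        have eq: "tr n (\<beta> * (x + z) ^ (1 + 2 ^ (e * (k * i)))) = tr n (\<beta> * x ^ (1 + 2 ^ (e * (k * i))))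
          + tr n (\<beta> * z ^ (1 + 2 ^ (e * (k * i)))) + tr n (x * Y i)"
          using C_split[OF card nem \<open>i \<le> m\<close> beta_sub, of x z k] by (simp only: Y_def)
        show ?thesis by (simp only: eq tr_ob[OF card] distrib_left)
      qed
    qed
    also have "\<dots> = (\<Sum>i\<in>?I. ob (c i) * tr n (\<beta> * x ^ (1 + 2 ^ (e * (k * i)))))
    + (\<Sum>i\<in>?I. ob (c i) * tr n (\<beta> * z ^ (1 + 2 ^ (e * (k * i)))))
    + tr n (\<Sum>i\<in>?I. ob (c i) * (x * Y i))"
      by (simp only: sum.distrib tr_sum[OF card])
    also have "(\<Sum>i\<in>?I. ob (c i) * (x * Y i)) = x * (\<Sum>i\<in>?I. ob (c i) * Y i)"
      by (simp add: sum_distrib_left ac_simps)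
    finally show ?thesis .
  qed
  have Lr: "\<alpha> * (tr n (\<alpha> * z) + \<alpha> * z) + (\<Sum>i\<in>?I. ob (c i) * Y i)
      = \<alpha> * (tr n (\<alpha> * z) + opk e (pcompose (c_poly m c) (monom 1 k)) (\<alpha> * z))"
  proof -
    have ap: "(\<alpha> * z) ^ (2 ^ (e * t)) = \<alpha> * z ^ (2 ^ (e * t))" for t
      by (simp add: power_mult_distrib pow_sub[OF card alpha_sub])
    have "\<alpha> * opk e (pcompose (c_poly m c) (monom 1 k)) (\<alpha> * z) = \<alpha> * (\<alpha> * z) + (\<Sum>i\<in>?I. ob (c i) * Y i)"
      unfolding G_formula[OF card] ap
      by (simp add: Y_def beta power2_eq_square distrib_left sum_distrib_left ac_simps)
    then show ?thesis by (simp add: distrib_left add.assoc)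
  qed
  have T: "tr n (x * (\<alpha> * (tr n (\<alpha> * z) + opk e (pcompose (c_poly m c) (monom 1 k)) (\<alpha> * z))))
     = tr n (x * (\<alpha> * (tr n (\<alpha> * z) + \<alpha> * z))) + tr n (x * (\<Sum>i\<in>?I. ob (c i) * Y i))"
    unfolding Lr[symmetric] by (simp only: distrib_left tr_add[OF card])
  show ?thesis
    unfolding fQ_eq P Cs T by (simp only: add_ac)
qed

end

theorem theorem4:
  fixes \<alpha> \<beta> :: "'a::{field,finite}" and n e m k :: nat and c :: "nat \<Rightarrow> bit"
  assumes card: "card (UNIV :: 'a set) = 2 ^ n"
    and nem: "n = e * m" and e: "e \<ge> 1" and m: "m \<ge> 1" and k: "k \<ge> 1"
    and alpha_sub: "\<alpha> ^ (2 ^ e) = \<alpha>" and alpha_nz: "\<alpha> \<noteq> 0"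
    and beta: "\<beta> = \<alpha> ^ 2"
  shows "(if even n then bent n (fQ n e m k \<alpha> \<beta> c) else semi_bent n (fQ n e m k \<alpha> \<beta> c))
     \<longleftrightarrow> coprime (pcompose (c_poly m c) (monom 1 k)) (monom 1 m - 1)"
proof -
  let ?K = "pcompose (c_poly m c) (monom 1 k)"
  let ?G = "opk e ?K :: 'a \<Rightarrow> 'a"
  define L where "L = (\<lambda>z. \<alpha> * (tr n (\<alpha> * z) + ?G (\<alpha> * z)))"
  let ?f = "fQ n e m k \<alpha> \<beta> c"
  let ?R = "{z. L z = 0}"
  note hyps = card nem e m k alpha_sub alpha_nz beta
  have f01: "\<forall>x. b01 (?f x)" using fQ01[OF hyps] by blast
  have f0: "?f 0 = 0" by (rule fQ0[OF hyps])
  have fB: "\<forall>x z. ?f (x + z) = ?f x + ?f z + tr n (x * L z)"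
    using fQ_bil[OF hyps] by (simp add: L_def)
  have ab: "(a::'a) + b = 0 \<longleftrightarrow> a = b" for a b
  proof
    assume "a + b = 0"
    have "a = a + b + b" by (simp only: add_cc[OF card])
    also have "\<dots> = b" using \<open>a + b = 0\<close> by simp
    finally show "a = b" .
  qed (simp add: add_self[OF card])
  have Rm: "z \<in> ?R \<longleftrightarrow> ?G (\<alpha> * z) = tr n (\<alpha> * z)" for z
  proof -
    have "z \<in> ?R \<longleftrightarrow> \<alpha> * (tr n (\<alpha> * z) + ?G (\<alpha> * z)) = 0" by (simp add: L_def)
    also have "\<dots> \<longleftrightarrow> tr n (\<alpha> * z) + ?G (\<alpha> * z) = 0" using alpha_nz by simp
    also have "\<dots> \<longleftrightarrow> tr n (\<alpha> * z) = ?G (\<alpha> * z)" by (rule ab)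
    finally show ?thesis by auto
  qed
  have G1: "?G 1 = 1" by (rule G_one[OF card])
  have tr1: "tr n (1::'a) = (if even n then 0 else 1)"
    using tr_one[OF card] of_nat_char2[OF card] by simp
  have en: "e * m = n" using nem by simp
  have cop_sol: "y = 0 \<or> y = 1" if cop: "coprime ?K (monom 1 m - 1)" and y: "?G y = tr n y" for y :: 'a
  proof (cases "tr n y = 0")
    case True
    then have "y = 0" using G_inj[OF card cop en m] y by simp
    then show ?thesis by simp
  next
    case False
    then have "tr n y = 1" using tr01[OF card] by blast
    then have "?G (y + 1) = 0" using y G1 by (simp add: opk_yadd[OF card] add_self[OF card])
    then have "y + 1 = 0" using G_inj[OF card cop en m] by blast
    then have "y = 1" using ab by blast
    then show ?thesis by simp
  qed
  have R0: "0 \<in> ?R" using Rm[of 0] by (simp add: opk_y0[OF card] tr_zero[OF card])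
  have ker: "\<exists>z. z \<in> ?R \<and> z \<noteq> 0 \<and> \<alpha> * z \<noteq> 1" if ncop: "\<not> coprime ?K (monom 1 m - 1)"
  proof -
    obtain w :: 'a where w: "w \<noteq> 0" "?G w = 0" "tr n w = 0" using G_kernel[OF card ncop en e m] by blast
    have aw: "\<alpha> * (w / \<alpha>) = w" using alpha_nz by simp
    have "w / \<alpha> \<in> ?R" using Rm[of "w / \<alpha>"] w aw by simp
    moreover have "w / \<alpha> \<noteq> 0" using w alpha_nz by simp
    moreover have "w \<noteq> 1" using w G1 by auto
    then have "\<alpha> * (w / \<alpha>) \<noteq> 1" using aw by simp
    ultimately show ?thesis by blast
  qed
  have fin: "finite ?R" by simp
  show ?thesis
  proof (cases "even n")
    case True
    have "bent n ?f \<longleftrightarrow> card ?R = 1" by (rule quad_bent_iff[OF card f01 f0 fB True])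
    moreover have "card ?R = 1 \<longleftrightarrow> coprime ?K (monom 1 m - 1)"
    proof
      assume c1: "card ?R = 1"
      show "coprime ?K (monom 1 m - 1)"
      proof (rule ccontr)
        assume "\<not> coprime ?K (monom 1 m - 1)"
        then obtain z where z: "z \<in> ?R" "z \<noteq> 0" using ker by blast
        have "{0, z} \<subseteq> ?R" using z R0 by blast
        then have "card {0, z} \<le> card ?R" using fin by (rule card_mono[rotated])
        then show False using c1 z by simp
      qed
    next
      assume cop: "coprime ?K (monom 1 m - 1)"
      have "?R = {0}"
      proof
        show "?R \<subseteq> {0}"
        proof
          fix z assume "z \<in> ?R"
          then have "?G (\<alpha> * z) = tr n (\<alpha> * z)" using Rm by blast
          then have "\<alpha> * z = 0 \<or> \<alpha> * z = 1" using cop_sol[OF cop] by blast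
          moreover have "\<alpha> * z \<noteq> 1"
          proof
            assume "\<alpha> * z = 1"
            then have "?G 1 = tr n 1" using \<open>?G (\<alpha> * z) = tr n (\<alpha> * z)\<close> by simp
            then show False using G1 tr1 True by simp
          qed
          ultimately show "z \<in> {0}" using alpha_nz by simp
        qed
        show "{0} \<subseteq> ?R" using R0 by blast
      qed
      then show "card ?R = 1" by simp
    qed
    ultimately show ?thesis using True by simp
  next
    case False
    have "semi_bent n ?f \<longleftrightarrow> card ?R = 2" by (rule quad_semibent_iff[OF card f01 f0 fB False])
    have inv: "1 / \<alpha> \<in> ?R" using Rm[of "1 / \<alpha>"] alpha_nz G1 tr1 False by simp
    moreover have "card ?R = 2 \<longleftrightarrow> coprime ?K (monom 1 m - 1)"
    proof
      assume c2: "card ?R = 2"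
      show "coprime ?K (monom 1 m - 1)"
      proof (rule ccontr)
        assume "\<not> coprime ?K (monom 1 m - 1)"
        then obtain z where z: "z \<in> ?R" "z \<noteq> 0" "\<alpha> * z \<noteq> 1" using ker by blast
        have z2: "z \<noteq> 1 / \<alpha>" using z(3) alpha_nz by auto
        have "{0, z, 1 / \<alpha>} \<subseteq> ?R" using z R0 inv by blast
        then have "card {0, z, 1 / \<alpha>} \<le> card ?R" using fin by (rule card_mono[rotated])
        moreover have "card {0, z, 1 / \<alpha>} = 3" using z(2) z2 alpha_nz by simp
        ultimately show False using c2 by simp
      qed
    next
      assume cop: "coprime ?K (monom 1 m - 1)"
      have "?R = {0, 1 / \<alpha>}"
      proof
        show "?R \<subseteq> {0, 1 / \<alpha>}"
        proof
          fix z assume "z \<in> ?R"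
          then have "?G (\<alpha> * z) = tr n (\<alpha> * z)" using Rm by blast
          then have "\<alpha> * z = 0 \<or> \<alpha> * z = 1" using cop_sol[OF cop] by blast
          then show "z \<in> {0, 1 / \<alpha>}"
          proof
            assume "\<alpha> * z = 0" then show ?thesis using alpha_nz by simp
          next
            assume h: "\<alpha> * z = 1"
            have "z = 1 / \<alpha>" using alpha_nz h by (simp add: eq_divide_eq mult.commute)
            then show ?thesis by simp
          qed
        qed
        show "{0, 1 / \<alpha>} \<subseteq> ?R" using R0 inv by blast
      qed
      then show "card ?R = 2" using alpha_nz by simp
    qed
    ultimately show ?thesis using False \<open>semi_bent n ?f \<longleftrightarrow> card ?R = 2\<close> by simp
  qed
qed


end
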